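(* Let $\rho$ be a two-qubit state on $\mathbb{C}^2\otimes\mathbb{C}^2$ whose correlation matrix $T$ is diagonal, and write $\lambda_i=T_{ii}$ for $i=0,1,2$. Then $$d_{\max}(\rho)=\frac{1}{\sqrt2}\sqrt{\sum_{i=0}^{2}\lambda_i^2(1-n_i^2)},$$ where $\vec n=(n_0,n_1,n_2)^T$ is the unit vector defined as follows: if $\rho_B\neq I/2$, then $\vec n=\vec r^B/\|\vec r^B\|$; if $\rho_B=I/2$, then $n_i=1$ (and $n_j=0$ for $j\neq i$) for an index $i$ with $|\lambda_i|=\min_k|\lambda_k|$.
   Context: Let $\sigma_0,\sigma_1,\sigma_2$ be the Pauli matrices $X,Y,Z$. Every two-qubit state can be written as $\rho=\frac14\big(I\otimes I+\sum_i r^A_i\sigma_i\otimes I+\sum_j r^B_j I\otimes\sigma_j+\sum_{i,j}T_{ij}\sigma_i\otimes\sigma_j\big)$, with Bloch vectors $r^A_i=\mathrm{Tr}(\sigma_i\rho_A)$, $r^B_j=\mathrm{Tr}(\sigma_j\rho_B)$ (where $\rho_A=\mathrm{Tr}_B\rho$, $\rho_B=\mathrm{Tr}_A\rho$) and real correlation matrix $T_{ij}=\mathrm{Tr}((\sigma_i\otimes\sigma_j)\rho)$. A unitary $U^B$ on $\mathbb{C}^2$ is called cyclic for $\rho$ if $[\rho_B,U^B]=0$. Set $\rho_f=(I\otimes U^B)\rho(I\otimes U^{B\dagger})$, define the Fu distance $d(\rho,U^B)=\frac{1}{\sqrt2}\|\rho-\rho_f\|_F$ (Frobenius norm), and $d_{\max}(\rho)=\max\{d(\rho,U^B):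 U^B\text{ unitary},\ [\rho_B,U^B]=0\}$. *)

theory Defs
  imports "HOL-Analysis.Analysis"
begin

text \<open>Qubit operators: complex 2x2 matrices indexed by the numeral type 2.
  Two-qubit operators: complex matrices indexed by 2 x 2 (first component = qubit A).\<close>

type_synonym qop = "complex^2^2"
type_synonym qqop = "complex^(2\<times>2)^(2\<times>2)"

definition adj :: "complex^'n^'n \<Rightarrow> complex^'n^'n" where
  "adj M = (\<chi> i j. cnj (M $ j $ i))"

definition unitary_mat :: "complex^'n^'n \<Rightarrow> bool" where
  "unitary_mat U \<longleftrightarrow> U ** adj U = mat 1 \<and> adj U ** U = mat 1"

definition trace_mat :: "complex^'n^'n \<Rightarrow> complex" where
  "trace_mat M = (\<Sum>i\<in>UNIV. M $ i $ i)"

definition kron :: "qop \<Rightarrow> qop \<Rightarrow> qqop" where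
  "kron A B = (\<chi> p q. A $ fst p $ fst q * B $ snd p $ snd q)"

definition density :: "complex^'n^'n \<Rightarrow> bool" where
  "density \<rho> \<longleftrightarrow> adj \<rho> = \<rho>
     \<and> (\<forall>v::complex^'n. 0 \<le> Re (\<Sum>i\<in>UNIV. \<Sum>j\<in>UNIV. cnj (v $ i) * \<rho> $ i $ j * v $ j))
     \<and> trace_mat \<rho> = 1"

definition pauliX :: qop where
  "pauliX = (\<chi> a b. if a \<noteq> b then 1 else 0)"
definition pauliY :: qop where
  "pauliY = (\<chi> a b. if a = 0 \<and> b = 1 then - \<i> else if a = 1 \<and> b = 0 then \<i> else 0)"
definition pauliZ :: qop where
  "pauliZ = (\<chi> a b. if a = b then (if a = 0 then 1 else -1) else 0)"

definition pauli :: "3 \<Rightarrow> qop" where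
  "pauli i = (if i = 0 then pauliX else if i = 1 then pauliY else pauliZ)"

definition ptrace_A :: "qqop \<Rightarrow> qop" where
  "ptrace_A \<rho> = (\<chi> j l. \<Sum>i\<in>UNIV. \<rho> $ (i, j) $ (i, l))"

definition blochB :: "qqop \<Rightarrow> real^3" where
  "blochB \<rho> = (\<chi> j. Re (trace_mat (pauli j ** ptrace_A \<rho>)))"

definition corr :: "qqop \<Rightarrow> 3 \<Rightarrow> 3 \<Rightarrow> real" where
  "corr \<rho> i j = Re (trace_mat (kron (pauli i) (pauli j) ** \<rho>))"

definition frob :: "complex^'n^'n \<Rightarrow> real" where
  "frob M = sqrt (\<Sum>i\<in>UNIV. \<Sum>j\<in>UNIV. (cmod (M $ i $ j))\<^sup>2)"

definition cyclic :: "qqop \<Rightarrow> qop \<Rightarrow> bool" where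
  "cyclic \<rho> U \<longleftrightarrow> unitary_mat U \<and> ptrace_A \<rho> ** U = U ** ptrace_A \<rho>"

definition rho_f :: "qqop \<Rightarrow> qop \<Rightarrow> qqop" where
  "rho_f \<rho> U = kron (mat 1) U ** \<rho> ** kron (mat 1) (adj U)"

definition fu_dist :: "qqop \<Rightarrow> qop \<Rightarrow> real" where
  "fu_dist \<rho> U = frob (\<rho> - rho_f \<rho> U) / sqrt 2"

definition fu_dists :: "qqop \<Rightarrow> real set" where
  "fu_dists \<rho> = {fu_dist \<rho> U | U. cyclic \<rho> U}"

definition is_dmax :: "qqop \<Rightarrow> real \<Rightarrow> bool" where
  "is_dmax \<rho> d \<longleftrightarrow> d \<in> fu_dists \<rho> \<and> (\<forall>x\<in>fu_dists \<rho>. x \<le> d)"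

end

theory Submission imports Defs begin

lemma ex2: fixes x :: 2 shows "x = 0 \<or> x = 1"
proof (induct x)
  case (of_int z)
  then have "z = 0 | z = 1" by fastforce
  then show ?case by auto
qed
lemma ex3: fixes x :: 3 shows "x = 0 \<or> x = 1 \<or> x = 2"
proof (induct x)
  case (of_int z)
  then have "z = 0 \<or> z = 1 \<or> z = 2" by fastforce
  then show ?case by auto
qed
lemma UNIV2: "(UNIV::2 set) = {0,1}"
proof (rule set_eqI)
  fix x :: 2 show "x \<in> UNIV \<longleftrightarrow> x \<in> {0,1}" using ex2[of x] by simp
qed
lemma sum2: "sum f (UNIV::2 set) = f 0 + f 1"
  unfolding UNIV2 by simp
lemma UNIV3: "(UNIV::3 set) = {0,1,2}"
proof (rule set_eqI)
  fix x :: 3 show "x \<in> UNIV \<longleftrightarrow> x \<in> {0,1,2}" using ex3[of x] by simp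
qed
lemma sum3: "sum f (UNIV::3 set) = f 0 + f 1 + f 2"
  unfolding UNIV3 by (simp add: ac_simps)
lemma all2: "(\<forall>i::2. P i) \<longleftrightarrow> P 0 \<and> P 1"
proof
  assume h: "P 0 \<and> P 1"
  show "\<forall>i. P i"
  proof
    fix i :: 2 show "P i" using ex2[of i] h by auto
  qed
qed simp
lemma sum_prod: "sum f (UNIV::('a::finite\<times>'b::finite) set) = (\<Sum>a\<in>UNIV. \<Sum>b\<in>UNIV. f (a,b))"
  by (subst UNIV_Times_UNIV[symmetric], subst sum.cartesian_product) simp
lemma sum22: "sum f (UNIV::(2\<times>2) set) = f (0,0) + f (0,1) + f (1,0) + f (1,1)"
  by (simp add: sum_prod sum2 add.assoc)

lemma qop_eq: "(M::qop) = N \<longleftrightarrow> M$0$0 = N$0$0 \<and> M$0$1 = N$0$1 \<and> M$1$0 = N$1$0 \<and> M$1$1 = N$1$1"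
  by (simp add: vec_eq_iff all2)

definition sm :: "complex \<Rightarrow> qop \<Rightarrow> qop" where "sm c M = (\<chi> i j. c * M$i$j)"
definition KU :: "qop \<Rightarrow> qop \<Rightarrow> qop" where "KU U M = M - U ** M ** adj U"
definition fs :: "qop \<Rightarrow> real" where "fs M = (\<Sum>i\<in>UNIV. \<Sum>j\<in>UNIV. (cmod (M $ i $ j))\<^sup>2)"
definition blk :: "qqop \<Rightarrow> 2 \<Rightarrow> 2 \<Rightarrow> qop" where "blk \<rho> a a' = (\<chi> b b'. \<rho>$(a,b)$(a',b'))"

lemma kron_left: "(kron (mat 1) U ** M)$(a,b)$q = (\<Sum>d\<in>UNIV. U$b$d * M$(a,d)$q)"
proof -
  have "(kron (mat 1) U ** M)$(a,b)$q = (\<Sum>c\<in>UNIV. \<Sum>d\<in>UNIV. ((mat 1::qop)$a$c * U$b$d) * M$(c,d)$q)"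
    by (simp add: matrix_matrix_mult_def kron_def sum_prod)
  also have "\<dots> = (\<Sum>d\<in>UNIV. U$b$d * M$(a,d)$q)"
    using ex2[of a] by (auto simp: sum2 mat_def)
  finally show ?thesis .
qed

lemma kron_right: "(M ** kron (mat 1) V)$p$(a,b) = (\<Sum>d\<in>UNIV. M$p$(a,d) * V$d$b)"
proof -
  have "(M ** kron (mat 1) V)$p$(a,b) = (\<Sum>c\<in>UNIV. \<Sum>d\<in>UNIV. M$p$(c,d) * ((mat 1::qop)$c$a * V$d$b))"
    by (simp add: matrix_matrix_mult_def kron_def sum_prod)
  also have "\<dots> = (\<Sum>d\<in>UNIV. M$p$(a,d) * V$d$b)"
    using ex2[of a] by (auto simp: sum2 mat_def)
  finally show ?thesis .
qed

lemma rhof_entry: "(\<rho> - rho_f \<rho> U)$(a,b)$(a',b') = KU U (blk \<rho> a a') $ b $ b'"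
  unfolding rho_f_def KU_def
  by (simp only: vector_minus_component kron_right kron_left) (simp add: matrix_matrix_mult_def blk_def)

lemma frob_blocks: "(frob (\<rho> - rho_f \<rho> U))\<^sup>2 = (\<Sum>a\<in>UNIV. \<Sum>a'\<in>UNIV. fs (KU U (blk \<rho> a a')))"
proof -
  have "(frob (\<rho> - rho_f \<rho> U))\<^sup>2 = (\<Sum>p\<in>UNIV. \<Sum>q\<in>UNIV. (cmod ((\<rho> - rho_f \<rho> U) $ p $ q))\<^sup>2)"
    unfolding frob_def by (simp add: sum_nonneg)
  also have "\<dots> = (\<Sum>a\<in>UNIV. \<Sum>a'\<in>UNIV. fs (KU U (blk \<rho> a a')))"
    unfolding fs_def sum22 sum2 rhof_entry by (simp add: algebra_simps)
  finally show ?thesis .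
qed


lemma mm2: "((A::qop) ** B) $ i $ j = A$i$0 * B$0$j + A$i$1 * B$1$j"
  by (simp add: matrix_matrix_mult_def sum2)

lemma adj_e: "adj M $ i $ j = cnj (M $ j $ i)" by (simp add: adj_def)
lemma sm_e: "sm c M $ i $ j = c * M $ i $ j" by (simp add: sm_def)

lemma fs_tr: "fs M = Re (trace_mat (M ** adj M))"
  by (simp add: fs_def trace_mat_def mm2 adj_e sum2 cmod_power2 complex_mult_cnj)

lemma adj_mult: "adj ((A::qop) ** B) = adj B ** adj A"
  by (simp add: qop_eq adj_e mm2 mult.commute)

lemma adj_adj: "adj (adj M) = M"
  by (simp add: vec_eq_iff adj_def)

lemma fs_unit_right: assumes "W ** adj W = mat 1" shows "fs (M ** W) = fs M"
proof -
  have "(M ** W) ** adj (M ** W) = M ** (W ** adj W) ** adj M"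
    by (simp add: adj_mult matrix_mul_assoc)
  then show ?thesis by (simp add: fs_tr assms)
qed

lemma mm_sub_r: "((A::qop) - B) ** (C::qop) = A ** C - B ** C"
  by (rule iffD2[OF qop_eq]) (simp add: mm2 algebra_simps)
lemma mm_sub_l: "(C::qop) ** ((A::qop) - B) = C ** A - C ** B"
  by (rule iffD2[OF qop_eq]) (simp add: mm2 algebra_simps)

lemma KU_alt: assumes "unitary_mat U" shows "KU U S = (S ** U - U ** S) ** adj U"
proof -
  have "(S ** U - U ** S) ** adj U = S ** (U ** adj U) - U ** S ** adj U"
    by (simp add: mm_sub_r matrix_mul_assoc)
  then show ?thesis using assms by (simp add: unitary_mat_def KU_def)
qed

definition bet :: "qop \<Rightarrow> 3 \<Rightarrow> complex" where
  "bet U j = (if j = 0 then (U$0$1 + U$1$0)/2 else if j = 1 then \<i> * (U$0$1 - U$1$0)/2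
              else (U$0$0 - U$1$1)/2)"
definition al :: "qop \<Rightarrow> complex" where "al U = (U$0$0 + U$1$1)/2"
definition gU :: "qop \<Rightarrow> 3 \<Rightarrow> real" where
  "gU U i = (\<Sum>j\<in>UNIV. (cmod (bet U j))\<^sup>2) - (cmod (bet U i))\<^sup>2"

lemma fs_e: "fs M = (cmod (M$0$0))\<^sup>2 + (cmod (M$0$1))\<^sup>2 + (cmod (M$1$0))\<^sup>2 + (cmod (M$1$1))\<^sup>2"
  by (simp add: fs_def sum2)

lemma fs_comm_k: "k = 0 \<or> k = 1 \<or> k = (2::3) \<Longrightarrow> fs (pauli k ** U - U ** pauli k) = 8 * gU U k"
  by (simp only: fs_e gU_def sum3 cmod_power2;
      auto simp add: bet_def mm2 pauli_def pauliX_def pauliY_def pauliZ_def power2_eq_square field_simps)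

lemma fs_comm: "fs (pauli i ** U - U ** pauli i) = 8 * gU U i"
  using fs_comm_k ex3 by blast

lemma fs_KU: assumes "unitary_mat U" shows "fs (KU U (pauli i)) = 8 * gU U i"
proof -
  have "adj U ** adj (adj U) = mat 1" using assms by (simp add: adj_adj unitary_mat_def)
  then show ?thesis by (simp add: KU_alt[OF assms] fs_unit_right fs_comm)
qed

lemma norm_sum: "(cmod (al U))\<^sup>2 + (\<Sum>j\<in>UNIV. (cmod (bet U j))\<^sup>2) = fs U / 2"
  by (simp only: fs_e sum3 cmod_power2; simp add: al_def bet_def power2_eq_square field_simps)

lemma fs_unitary: assumes "unitary_mat U" shows "fs U = 2"
proof -
  have "fs U = Re (trace_mat (mat 1 :: qop))" using assms by (simp add: fs_tr unitary_mat_def)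
  also have "\<dots> = 2" by (simp add: trace_mat_def mat_def sum2)
  finally show ?thesis .
qed

lemma bet_le1: assumes "unitary_mat U" shows "(\<Sum>j\<in>UNIV. (cmod (bet U j))\<^sup>2) \<le> 1"
  using norm_sum[of U] fs_unitary[OF assms] by (simp add: add_nonneg_nonneg) (smt (verit) zero_le_power2)


lemma ptrace_blk: "ptrace_A \<rho> = blk \<rho> 0 0 + blk \<rho> 1 1"
  by (rule iffD2[OF qop_eq]) (simp add: ptrace_A_def blk_def sum2)

lemma KU_e: "KU U M $ i $ j = M$i$j - (U$i$0 * M$0$0 + U$i$1 * M$1$0) * cnj (U$j$0)
   - (U$i$0 * M$0$1 + U$i$1 * M$1$1) * cnj (U$j$1)"
  by (simp add: KU_def mm2 adj_e)

lemma KU_add: "KU U (A + B) = KU U A + KU U B"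
  by (rule iffD2[OF qop_eq]) (simp add: KU_e algebra_simps)
lemma KU_sub: "KU U (A - B) = KU U A - KU U B"
  by (rule iffD2[OF qop_eq]) (simp add: KU_e algebra_simps)
lemma KU_sm: "KU U (sm c A) = sm c (KU U A)"
  by (rule iffD2[OF qop_eq]) (simp add: KU_e sm_e algebra_simps)

lemma KU_comm: assumes "unitary_mat U" "P ** U = U ** P" shows "KU U P = 0"
proof -
  have "U ** P ** adj U = P ** (U ** adj U)" using assms(2) by (simp add: matrix_mul_assoc)
  then show ?thesis using assms(1) by (simp add: KU_def unitary_mat_def)
qed

lemma KU_scal: assumes "unitary_mat U" shows "KU U (sm c (mat 1)) = 0"
  by (rule KU_comm[OF assms]) (rule iffD2[OF qop_eq], simp add: mm2 sm_e mat_def)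

lemma sm0: "sm 0 M = 0" by (simp add: vec_eq_iff sm_def)
lemma sm_zero: "sm c 0 = 0" by (simp add: vec_eq_iff sm_def)
lemma KU_id: assumes "unitary_mat U" shows "KU U (mat 1) = 0"
  by (rule KU_comm[OF assms]) simp

lemma fs_sm: "fs (sm c M) = (cmod c)\<^sup>2 * fs M"
  by (simp add: fs_e sm_e norm_mult power_mult_distrib algebra_simps)

lemma fs_neg: "fs (- M) = fs M" by (simp add: fs_e)

lemma combine: assumes "X00 + X11 = 0"
  shows "fs X00 + fs X01 + fs X10 + fs X11 = (fs (X00 - X11) + fs (X01 + X10) + fs (sm \<i> (X01 - X10))) / 2"
proof -
  have h: "X11 = - X00" using assms by (simp add: eq_neg_iff_add_eq_0 add.commute)
  show ?thesis unfolding h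
    by (simp only: fs_e sm_e vector_minus_component vector_add_component vector_uminus_component cmod_power2;
        simp add: power2_eq_square field_simps)
qed

lemma pauli_decomp: "(M::qop) = sm (trace_mat M / 2) (mat 1) + sm (trace_mat (pauliX ** M) / 2) pauliX
   + sm (trace_mat (pauliY ** M) / 2) pauliY + sm (trace_mat (pauliZ ** M) / 2) pauliZ"
  by (rule iffD2[OF qop_eq]) (simp add: sm_e trace_mat_def sum2 mm2 mat_def pauliX_def pauliY_def pauliZ_def field_simps)

lemma KU_decomp: assumes "unitary_mat U"
  shows "KU U M = sm (trace_mat (pauliX ** M) / 2) (KU U pauliX) + sm (trace_mat (pauliY ** M) / 2) (KU U pauliY)
   + sm (trace_mat (pauliZ ** M) / 2) (KU U pauliZ)"
  apply (subst pauli_decomp[of M])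
  by (simp add: KU_add KU_sm KU_id[OF assms] sm_zero)

lemma adj_pauli: "adj (pauli i) = pauli i"
  by (rule iffD2[OF qop_eq]) (simp add: adj_e pauli_def pauliX_def pauliY_def pauliZ_def)

lemma adj_kron: "adj (kron A B) = kron (adj A) (adj B)"
  by (simp add: vec_eq_iff adj_def kron_def)

lemma tr_herm: fixes A B :: "complex^'n^'n" assumes "adj A = A" "adj B = B"
  shows "trace_mat (A ** B) = complex_of_real (Re (trace_mat (A ** B)))"
proof -
  have eA: "\<And>i k. cnj (A$i$k) = A$k$i"
  proof - fix i k show "cnj (A$i$k) = A$k$i" using arg_cong[OF assms(1), of "\<lambda>M. M$k$i"] by (simp add: adj_def) qed
  have eB: "\<And>i k. cnj (B$i$k) = B$k$i"
  proof - fix i k show "cnj (B$i$k) = B$k$i" using arg_cong[OF assms(2), of "\<lambda>M. M$k$i"] by (simp add: adj_def) qed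
  have "cnj (trace_mat (A ** B)) = (\<Sum>i\<in>UNIV. \<Sum>k\<in>UNIV. cnj (A$i$k) * cnj (B$k$i))"
    by (simp add: trace_mat_def matrix_matrix_mult_def)
  also have "\<dots> = (\<Sum>i\<in>UNIV. \<Sum>k\<in>UNIV. A$k$i * B$i$k)" by (simp add: eA eB)
  also have "\<dots> = (\<Sum>k\<in>UNIV. \<Sum>i\<in>UNIV. A$k$i * B$i$k)" by (rule sum.swap)
  also have "\<dots> = trace_mat (A ** B)" by (simp add: trace_mat_def matrix_matrix_mult_def)
  finally have "cnj (trace_mat (A ** B)) = trace_mat (A ** B)" .
  then show ?thesis by (simp add: complex_eq_iff)
qed

lemma adj_ptrace: assumes "adj \<rho> = \<rho>" shows "adj (ptrace_A \<rho>) = ptrace_A \<rho>"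
proof -
  have e: "\<And>p q. cnj (\<rho>$p$q) = \<rho>$q$p"
  proof - fix p q show "cnj (\<rho>$p$q) = \<rho>$q$p" using arg_cong[OF assms, of "\<lambda>M. M$q$p"] by (simp add: adj_def) qed
  show ?thesis unfolding adj_def ptrace_A_def vec_eq_iff
    by (simp add: e)
qed

lemma trace_ptrace: "trace_mat (ptrace_A \<rho>) = trace_mat \<rho>"
proof -
  have "trace_mat (ptrace_A \<rho>) = (\<Sum>j\<in>UNIV. \<Sum>i\<in>UNIV. \<rho>$(i,j)$(i,j))" by (simp add: trace_mat_def ptrace_A_def)
  also have "\<dots> = (\<Sum>i\<in>UNIV. \<Sum>j\<in>UNIV. \<rho>$(i,j)$(i,j))" by (rule sum.swap)
  also have "\<dots> = trace_mat \<rho>" by (simp add: trace_mat_def sum_prod)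
  finally show ?thesis .
qed

lemma trX: "trace_mat (kron pauliX B ** \<rho>) = trace_mat (B ** (blk \<rho> 0 1 + blk \<rho> 1 0))"
  by (simp add: trace_mat_def matrix_matrix_mult_def sum22 sum2 kron_def blk_def pauliX_def algebra_simps)
lemma trY: "trace_mat (kron pauliY B ** \<rho>) = trace_mat (B ** sm \<i> (blk \<rho> 0 1 - blk \<rho> 1 0))"
  by (simp add: trace_mat_def matrix_matrix_mult_def sum22 sum2 kron_def blk_def pauliY_def sm_e; algebra)
lemma trZ: "trace_mat (kron pauliZ B ** \<rho>) = trace_mat (B ** (blk \<rho> 0 0 - blk \<rho> 1 1))"
  by (simp add: trace_mat_def matrix_matrix_mult_def sum22 sum2 kron_def blk_def pauliZ_def algebra_simps)


lemma ct_real: assumes "adj \<rho> = \<rho>"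
  shows "trace_mat (kron (pauli i) (pauli j) ** \<rho>) = of_real (corr \<rho> i j)"
  unfolding corr_def by (rule tr_herm) (simp_all add: adj_kron adj_pauli assms)

lemma ct_diag: assumes "adj \<rho> = \<rho>" "\<forall>i j. i \<noteq> j \<longrightarrow> corr \<rho> i j = 0"
  shows "trace_mat (kron (pauli i) (pauli j) ** \<rho>) = (if i = j then of_real (corr \<rho> i i) else 0)"
  using ct_real[OF assms(1), of i j] assms(2) by auto

lemma pauli_simps: "pauli 0 = pauliX" "pauli 1 = pauliY" "pauli 2 = pauliZ"
  by (simp_all add: pauli_def)

lemma distinct3: "(0::3) \<noteq> 1" "(0::3) \<noteq> 2" "(1::3) \<noteq> 2" "(1::3) \<noteq> 0" "(2::3) \<noteq> 0" "(2::3) \<noteq> 1"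
  by simp_all

lemma fs_one: assumes "unitary_mat U"
  "trace_mat (pauliX ** H) = a" "trace_mat (pauliY ** H) = b" "trace_mat (pauliZ ** H) = c"
  shows "KU U H = sm (a/2) (KU U pauliX) + sm (b/2) (KU U pauliY) + sm (c/2) (KU U pauliZ)"
  using KU_decomp[OF assms(1), of H] assms(2-4) by simp

lemma trX': "trace_mat (B ** (blk \<rho> 0 1 + blk \<rho> 1 0)) = trace_mat (kron (pauli 0) B ** \<rho>)"
  by (simp add: pauli_simps trX)
lemma trY': "trace_mat (B ** sm \<i> (blk \<rho> 0 1 - blk \<rho> 1 0)) = trace_mat (kron (pauli 1) B ** \<rho>)"
  by (simp add: pauli_simps trY)
lemma trZ': "trace_mat (B ** (blk \<rho> 0 0 - blk \<rho> 1 1)) = trace_mat (kron (pauli 2) B ** \<rho>)"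
  by (simp add: pauli_simps trZ)

lemma fs_total:
  assumes U: "unitary_mat U" and comm: "ptrace_A \<rho> ** U = U ** ptrace_A \<rho>"
    and herm: "adj \<rho> = \<rho>" and diag: "\<forall>i j. i \<noteq> j \<longrightarrow> corr \<rho> i j = 0"
  shows "(frob (\<rho> - rho_f \<rho> U))\<^sup>2 = (\<Sum>i\<in>UNIV. (corr \<rho> i i)\<^sup>2 * gU U i)"
proof -
  define X where "X a b = KU U (blk \<rho> a b)" for a b
  define HX where "HX = blk \<rho> 0 1 + blk \<rho> 1 0"
  define HY where "HY = sm \<i> (blk \<rho> 0 1 - blk \<rho> 1 0)"
  define HZ where "HZ = blk \<rho> 0 0 - blk \<rho> 1 1"
  have ct: "\<And>i j. trace_mat (kron (pauli i) (pauli j) ** \<rho>) = (if i = j then of_real (corr \<rho> i i) else 0)"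
    using ct_diag[OF herm diag] .
  have X0: "X 0 0 + X 1 1 = 0"
    unfolding X_def KU_add[symmetric] ptrace_blk[symmetric] by (rule KU_comm[OF U comm])
  have "(frob (\<rho> - rho_f \<rho> U))\<^sup>2 = fs (X 0 0) + fs (X 0 1) + fs (X 1 0) + fs (X 1 1)"
    unfolding frob_blocks X_def by (simp add: sum2)
  also have "\<dots> = (fs (X 0 0 - X 1 1) + fs (X 0 1 + X 1 0) + fs (sm \<i> (X 0 1 - X 1 0))) / 2"
    by (rule combine[OF X0])
  also have "X 0 0 - X 1 1 = KU U HZ" by (simp add: X_def HZ_def KU_sub)
  also have "X 0 1 + X 1 0 = KU U HX" by (simp add: X_def HX_def KU_add)
  also have "sm \<i> (X 0 1 - X 1 0) = KU U HY" by (simp add: X_def HY_def KU_sub KU_sm)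
  also have "KU U HX = sm (of_real (corr \<rho> 0 0) / 2) (KU U pauliX)"
  proof -
    have t: "\<And>j. trace_mat (pauli j ** HX) = (if 0 = j then of_real (corr \<rho> 0 0) else 0)"
      unfolding HX_def trX' by (rule ct)
    show ?thesis using fs_one[OF U, of HX, OF t[of 0, unfolded pauli_simps] t[of 1, unfolded pauli_simps] t[of 2, unfolded pauli_simps]]
      by (simp add: sm0)
  qed
  also have "KU U HY = sm (of_real (corr \<rho> 1 1) / 2) (KU U pauliY)"
  proof -
    have t: "\<And>j. trace_mat (pauli j ** HY) = (if 1 = j then of_real (corr \<rho> 1 1) else 0)"
      unfolding HY_def trY' by (rule ct)
    show ?thesis using fs_one[OF U, of HY, OF t[of 0, unfolded pauli_simps] t[of 1, unfolded pauli_simps] t[of 2, unfolded pauli_simps]]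
      by (simp add: sm0)
  qed
  also have "KU U HZ = sm (of_real (corr \<rho> 2 2) / 2) (KU U pauliZ)"
  proof -
    have t: "\<And>j. trace_mat (pauli j ** HZ) = (if 2 = j then of_real (corr \<rho> 2 2) else 0)"
      unfolding HZ_def trZ' by (rule ct)
    show ?thesis using fs_one[OF U, of HZ, OF t[of 0, unfolded pauli_simps] t[of 1, unfolded pauli_simps] t[of 2, unfolded pauli_simps]]
      by (simp add: sm0)
  qed
  finally show ?thesis
    using fs_KU[OF U, of 0] fs_KU[OF U, of 1] fs_KU[OF U, of 2]
    by (simp add: fs_sm pauli_simps sum3 norm_divide power_divide power2_eq_square; simp add: algebra_simps)
qed


lemma trB_real: assumes "adj \<rho> = \<rho>"
  shows "trace_mat (pauli j ** ptrace_A \<rho>) = of_real (blochB \<rho> $ j)"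
proof -
  have "trace_mat (pauli j ** ptrace_A \<rho>) = of_real (Re (trace_mat (pauli j ** ptrace_A \<rho>)))"
    by (rule tr_herm) (simp_all add: adj_pauli adj_ptrace assms)
  then show ?thesis by (simp add: blochB_def)
qed

lemma rhoB_struct: assumes "adj \<rho> = \<rho>" "trace_mat \<rho> = 1"
  shows "ptrace_A \<rho> = sm (1/2) (mat 1) + sm (of_real (blochB \<rho> $ 0) / 2) pauliX
     + sm (of_real (blochB \<rho> $ 1) / 2) pauliY + sm (of_real (blochB \<rho> $ 2) / 2) pauliZ"
  apply (subst pauli_decomp[of "ptrace_A \<rho>"])
  using trB_real[OF assms(1), of 0] trB_real[OF assms(1), of 1] trB_real[OF assms(1), of 2]
  by (simp add: pauli_simps trace_ptrace assms(2))

lemma rhoB_e: assumes "adj \<rho> = \<rho>" "trace_mat \<rho> = 1"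
  shows "ptrace_A \<rho> $0$0 = (1 + of_real (blochB \<rho> $ 2))/2"
   "ptrace_A \<rho> $0$1 = (of_real (blochB \<rho> $ 0) - \<i> * of_real (blochB \<rho> $ 1))/2"
   "ptrace_A \<rho> $1$0 = (of_real (blochB \<rho> $ 0) + \<i> * of_real (blochB \<rho> $ 1))/2"
   "ptrace_A \<rho> $1$1 = (1 - of_real (blochB \<rho> $ 2))/2"
  by (subst rhoB_struct[OF assms], simp add: sm_e mat_def pauliX_def pauliY_def pauliZ_def field_simps)+

lemma rhoB_zero: assumes "adj \<rho> = \<rho>" "trace_mat \<rho> = 1" "blochB \<rho> = 0"
  shows "ptrace_A \<rho> = (1/2) *\<^sub>R mat 1"
  by (subst rhoB_struct[OF assms(1,2)], rule iffD2[OF qop_eq])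
     (simp add: assms(3) sm_e mat_def pauliX_def pauliY_def pauliZ_def vector_scaleR_component del: scaleR_conv_of_real;
      simp add: scaleR_conv_of_real)

lemma comm_eqs: fixes r0 r1 r2 :: real and P U :: qop
  assumes "P ** U = U ** P" "P$0$0 = (1 + of_real r2)/2" "P$0$1 = (of_real r0 - \<i> * of_real r1)/2"
    "P$1$0 = (of_real r0 + \<i> * of_real r1)/2" "P$1$1 = (1 - of_real r2)/2"
  shows "(of_real r0 - \<i> * of_real r1) * U$1$0 = U$0$1 * (of_real r0 + \<i> * of_real r1)"
    "U$0$1 * of_real r2 = (of_real r0 - \<i> * of_real r1) / 2 * (U$0$0 - U$1$1)"
    "U$1$0 * of_real r2 = (of_real r0 + \<i> * of_real r1) / 2 * (U$0$0 - U$1$1)"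
proof -
  have e: "(P ** U)$i$j = (U ** P)$i$j" for i j using assms(1) by simp
  have ii: "\<i> * \<i> = (-1::complex)" by simp
  show "(of_real r0 - \<i> * of_real r1) * U$1$0 = U$0$1 * (of_real r0 + \<i> * of_real r1)"
    using e[of 0 0, unfolded mm2 assms(2-5)] ii by (simp add: field_simps; algebra)
  show "U$0$1 * of_real r2 = (of_real r0 - \<i> * of_real r1) / 2 * (U$0$0 - U$1$1)"
    using e[of 0 1, unfolded mm2 assms(2-5)] ii by (simp add: field_simps; algebra)
  show "U$1$0 * of_real r2 = (of_real r0 + \<i> * of_real r1) / 2 * (U$0$0 - U$1$1)"
    using e[of 1 0, unfolded mm2 assms(2-5)] ii by (simp add: field_simps; algebra)
qed

lemma bet012: "bet U 0 = (U$0$1 + U$1$0)/2" "bet U 1 = \<i> * (U$0$1 - U$1$0)/2" "bet U 2 = (U$0$0 - U$1$1)/2"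
  by (simp_all add: bet_def)

lemma comm_bet: fixes r0 r1 r2 :: real and P U :: qop
  assumes "P ** U = U ** P" "P$0$0 = (1 + of_real r2)/2" "P$0$1 = (of_real r0 - \<i> * of_real r1)/2"
    "P$1$0 = (of_real r0 + \<i> * of_real r1)/2" "P$1$1 = (1 - of_real r2)/2"
  shows "bet U 0 * of_real r1 = bet U 1 * of_real r0" "bet U 0 * of_real r2 = bet U 2 * of_real r0"
    "bet U 1 * of_real r2 = bet U 2 * of_real r1"
proof -
  note E = comm_eqs[OF assms]
  have ii: "\<i> * \<i> = (-1::complex)" by simp
  show "bet U 0 * of_real r1 = bet U 1 * of_real r0" using E(1) ii unfolding bet012 by algebra
  show "bet U 0 * of_real r2 = bet U 2 * of_real r0" using E(2,3) ii unfolding bet012 by algebra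
  show "bet U 1 * of_real r2 = bet U 2 * of_real r1" using E(2,3) ii unfolding bet012 by algebra
qed


lemma ineqA: fixes Ba Bb Bc ra rb rc s :: real
  assumes "0 \<le> Ba" "0 \<le> Bb" "0 \<le> Bc" "Ba + Bb + Bc \<le> 1"
    "Ba * rb\<^sup>2 = Bb * ra\<^sup>2" "Ba * rc\<^sup>2 = Bc * ra\<^sup>2" "s = ra\<^sup>2 + rb\<^sup>2 + rc\<^sup>2" "0 < s"
  shows "Bb + Bc \<le> 1 - ra\<^sup>2 / s"
proof -
  have e: "s * (Bb + Bc) = (Ba + Bb + Bc) * (rb\<^sup>2 + rc\<^sup>2)" using assms(5,6,7) by algebra
  have "(Ba + Bb + Bc) * (rb\<^sup>2 + rc\<^sup>2) \<le> rb\<^sup>2 + rc\<^sup>2"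
    by (rule mult_left_le_one_le) (use assms in auto)
  then have "s * (Bb + Bc) \<le> s - ra\<^sup>2" using e assms(7) by simp
  then show ?thesis using assms(8) by (simp add: field_simps)
qed

lemma ineqB: fixes a b c x y z :: real
  assumes "0 \<le> x" "0 \<le> y" "0 \<le> z" "x + y + z \<le> 1" "a \<le> b" "a \<le> c" "0 \<le> b" "0 \<le> c"
  shows "a * (y + z) + b * (x + z) + c * (x + y) \<le> b + c"
proof -
  have "a * y \<le> b * y" using assms by (simp add: mult_right_mono)
  moreover have "a * z \<le> c * z" using assms by (simp add: mult_right_mono)
  moreover have "(x + y + z) * (b + c) \<le> b + c"
    by (rule mult_left_le_one_le) (use assms in auto)
  ultimately show ?thesis by (simp add: algebra_simps)
qed

lemma gU3: "gU U 0 = (cmod (bet U 1))\<^sup>2 + (cmod (bet U 2))\<^sup>2"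
  "gU U 1 = (cmod (bet U 0))\<^sup>2 + (cmod (bet U 2))\<^sup>2"
  "gU U 2 = (cmod (bet U 0))\<^sup>2 + (cmod (bet U 1))\<^sup>2"
  by (simp_all add: gU_def sum3)

lemma cm_eq: fixes x y :: complex and a b :: real
  assumes "x * of_real a = y * of_real b" shows "(cmod x)\<^sup>2 * a\<^sup>2 = (cmod y)\<^sup>2 * b\<^sup>2"
proof -
  have "cmod (x * of_real a) = cmod (y * of_real b)" using assms by simp
  then have "((cmod x) * \<bar>a\<bar>)\<^sup>2 = ((cmod y) * \<bar>b\<bar>)\<^sup>2" by (simp add: norm_mult)
  then show ?thesis by (simp add: power_mult_distrib)
qed

definition nsig :: "real^3 \<Rightarrow> qop" where
  "nsig n = (\<chi> i j. if i = 0 \<and> j = 0 then of_real (n$2) else if i = 0 then of_real (n$0) - \<i> * of_real (n$1)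
     else if j = 0 then of_real (n$0) + \<i> * of_real (n$1) else - of_real (n$2))"

lemma nsig_e: "nsig n $0$0 = of_real (n$2)" "nsig n $0$1 = of_real (n$0) - \<i> * of_real (n$1)"
  "nsig n $1$0 = of_real (n$0) + \<i> * of_real (n$1)" "nsig n $1$1 = - of_real (n$2)"
  by (simp_all add: nsig_def)

lemma nsig_unitary: assumes "(n$0)\<^sup>2 + (n$1)\<^sup>2 + (n$2)\<^sup>2 = 1" shows "unitary_mat (nsig n)"
proof -
  have ii: "\<i> * \<i> = (-1::complex)" by simp
  have h: "(of_real (n$0))\<^sup>2 + (of_real (n$1))\<^sup>2 + (of_real (n$2))\<^sup>2 = (1::complex)"
    using arg_cong[OF assms, of complex_of_real] by simp
  have a: "adj (nsig n) = nsig n" by (rule iffD2[OF qop_eq]) (simp add: adj_e nsig_e)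
  have "nsig n ** nsig n = mat 1"
    apply (rule iffD2[OF qop_eq])
    using assms by (simp add: mm2 nsig_e mat_def complex_eq_iff power2_eq_square algebra_simps)
  then show ?thesis by (simp add: unitary_mat_def a)
qed

lemma nsig_comm: fixes P :: qop and r0 r1 r2 t :: real
  assumes "P$0$0 = (1 + of_real r2)/2" "P$0$1 = (of_real r0 - \<i> * of_real r1)/2"
    "P$1$0 = (of_real r0 + \<i> * of_real r1)/2" "P$1$1 = (1 - of_real r2)/2"
    "r0 = t * n$0" "r1 = t * n$1" "r2 = t * n$2"
  shows "P ** nsig n = nsig n ** P"
proof -
  have ii: "\<i> * \<i> = (-1::complex)" by simp
  show ?thesis
    apply (rule iffD2[OF qop_eq])
    unfolding mm2 nsig_e assms(1-4) unfolding assms(5-7)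
    by (simp add: complex_eq_iff field_simps)
qed

lemma nsig_gU: assumes "(n$0)\<^sup>2 + (n$1)\<^sup>2 + (n$2)\<^sup>2 = 1" shows "gU (nsig n) i = 1 - (n$i)\<^sup>2"
proof -
  have b: "bet (nsig n) j = of_real (n$j)" for j
    using ex3[of j] by (auto simp: bet012 nsig_e algebra_simps)
  show ?thesis using assms by (simp add: gU_def b sum3)
qed

lemma pauli_unitary: "unitary_mat (pauli k)"
proof -
  have "pauli k ** pauli k = mat 1"
    using ex3[of k] by (auto intro!: iffD2[OF qop_eq] simp: mm2 pauli_def pauliX_def pauliY_def pauliZ_def mat_def)
  then show ?thesis by (simp add: unitary_mat_def adj_pauli)
qed

lemma pauli_gU: "gU (pauli k) i = 1 - ((axis k 1 :: real^3) $ i)\<^sup>2"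
proof -
  have b: "bet (pauli k) j = (if j = k then 1 else 0)" for j
    using ex3[of j] ex3[of k] by (auto simp: bet012 pauli_def pauliX_def pauliY_def pauliZ_def)
  show ?thesis using ex3[of i] ex3[of k] by (auto simp: gU_def b sum3 axis_def)
qed

lemma half_comm: "((1/2) *\<^sub>R mat 1 :: qop) ** (U::qop) = U ** ((1/2) *\<^sub>R mat 1)"
  by (rule iffD2[OF qop_eq]) (simp add: mm2 mat_def vector_scaleR_component del: scaleR_conv_of_real)


theorem lemma3:
  fixes \<rho> :: qqop and n :: "real^3"
  assumes dens: "density \<rho>"
    and diag: "\<forall>i j. i \<noteq> j \<longrightarrow> corr \<rho> i j = 0"
    and n_def: "if ptrace_A \<rho> \<noteq> (1/2) *\<^sub>R mat 1
                then n = (1 / norm (blochB \<rho>)) *\<^sub>R blochB \<rho>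
                else (\<exists>i. (\<forall>k. \<bar>corr \<rho> i i\<bar> \<le> \<bar>corr \<rho> k k\<bar>) \<and> n = axis i 1)"
  shows "is_dmax \<rho> ((1 / sqrt 2) * sqrt (\<Sum>i\<in>UNIV. (corr \<rho> i i)\<^sup>2 * (1 - (n $ i)\<^sup>2)))"
proof -
  have herm: "adj \<rho> = \<rho>" and tr1: "trace_mat \<rho> = 1" using dens by (simp_all add: density_def)
  define G where "G = (\<Sum>i\<in>UNIV. (corr \<rho> i i)\<^sup>2 * (1 - (n$i)\<^sup>2))"
  define F where "F U = (\<Sum>i\<in>UNIV. (corr \<rho> i i)\<^sup>2 * gU U i)" for U
  have fd: "fu_dist \<rho> U = sqrt (F U) / sqrt 2" if "cyclic \<rho> U" for U
  proof -
    have "(frob (\<rho> - rho_f \<rho> U))\<^sup>2 = F U" unfolding F_def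
      using that herm diag by (intro fs_total) (auto simp: cyclic_def)
    moreover have "frob (\<rho> - rho_f \<rho> U) \<ge> 0" unfolding frob_def by (intro real_sqrt_ge_zero sum_nonneg) simp
    ultimately have "frob (\<rho> - rho_f \<rho> U) = sqrt (F U)" by (metis real_sqrt_abs abs_of_nonneg)
    then show ?thesis by (simp add: fu_dist_def)
  qed
  have main: "(\<forall>U. cyclic \<rho> U \<longrightarrow> F U \<le> G) \<and> (\<exists>U. cyclic \<rho> U \<and> F U = G)"
  proof (cases "ptrace_A \<rho> \<noteq> (1/2) *\<^sub>R mat 1")
    case True
    then have nd: "n = (1 / norm (blochB \<rho>)) *\<^sub>R blochB \<rho>" using n_def by simp
    define r where "r = blochB \<rho>"
    define s where "s = (r$0)\<^sup>2 + (r$1)\<^sup>2 + (r$2)\<^sup>2"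
    have ns: "(norm r)\<^sup>2 = s" unfolding power2_norm_eq_inner by (simp add: s_def inner_vec_def sum3 power2_eq_square)
    have "r \<noteq> 0" using True rhoB_zero[OF herm tr1] r_def by auto
    then have np: "norm r > 0" by simp
    then have "0 < (norm r)\<^sup>2" by simp
    then have sp: "s > 0" using ns by simp
    have nn: "n$i = r$i / norm r" for i by (simp add: nd r_def)
    have nsq: "(n$i)\<^sup>2 = (r$i)\<^sup>2 / s" for i by (simp add: nn power_divide ns)
    have "(n$0)\<^sup>2 + (n$1)\<^sup>2 + (n$2)\<^sup>2 = ((r$0)\<^sup>2 + (r$1)\<^sup>2 + (r$2)\<^sup>2) / s"
      by (simp add: nsq add_divide_distrib)
    then have n1: "(n$0)\<^sup>2 + (n$1)\<^sup>2 + (n$2)\<^sup>2 = 1" using sp by (simp add: s_def)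
    note PE = rhoB_e[OF herm tr1, folded r_def]
    show ?thesis
    proof
      show "\<forall>U. cyclic \<rho> U \<longrightarrow> F U \<le> G"
      proof (intro allI impI)
        fix U assume cU: "cyclic \<rho> U"
        then have uU: "unitary_mat U" and cm: "ptrace_A \<rho> ** U = U ** ptrace_A \<rho>" by (auto simp: cyclic_def)
        note CB = comm_bet[OF cm PE]
        define B where "B j = (cmod (bet U j))\<^sup>2" for j
        have B0: "B j \<ge> 0" for j by (simp add: B_def)
        have Bs: "B 0 + B 1 + B 2 \<le> 1" using bet_le1[OF uU] by (simp add: B_def sum3)
        have e01: "B 0 * (r$1)\<^sup>2 = B 1 * (r$0)\<^sup>2" using cm_eq[OF CB(1)] by (simp add: B_def)
        have e02: "B 0 * (r$2)\<^sup>2 = B 2 * (r$0)\<^sup>2" using cm_eq[OF CB(2)] by (simp add: B_def)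
        have e12: "B 1 * (r$2)\<^sup>2 = B 2 * (r$1)\<^sup>2" using cm_eq[OF CB(3)] by (simp add: B_def)
        have g0: "gU U 0 \<le> 1 - (n$0)\<^sup>2" unfolding gU3 nsq B_def[symmetric]
          by (rule ineqA[where Ba="B 0" and Bb="B 1" and Bc="B 2" and ra="r$0" and rb="r$1" and rc="r$2"]) (use B0 Bs e01 e02 s_def sp in auto)
        have g1: "gU U 1 \<le> 1 - (n$1)\<^sup>2" unfolding gU3 nsq B_def[symmetric]
          by (rule ineqA[where Ba="B 1" and Bb="B 0" and Bc="B 2" and ra="r$1" and rb="r$0" and rc="r$2"]) (use B0 Bs e01 e12 s_def sp in \<open>auto simp: ac_simps\<close>)
        have g2: "gU U 2 \<le> 1 - (n$2)\<^sup>2" unfolding gU3 nsq B_def[symmetric]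
          by (rule ineqA[where Ba="B 2" and Bb="B 0" and Bc="B 1" and ra="r$2" and rb="r$0" and rc="r$1"]) (use B0 Bs e02 e12 s_def sp in \<open>auto simp: ac_simps\<close>)
        show "F U \<le> G" unfolding F_def G_def sum3 using g0 g1 g2
          by (intro add_mono mult_left_mono) auto
      qed
      show "\<exists>U. cyclic \<rho> U \<and> F U = G"
      proof (intro exI conjI)
        show "cyclic \<rho> (nsig n)" unfolding cyclic_def
          using np by (intro conjI nsig_unitary[OF n1] nsig_comm[OF PE, of "norm r"]) (simp_all add: nn)
        show "F (nsig n) = G" unfolding F_def G_def by (simp add: nsig_gU[OF n1])
      qed
    qed
  next
    case False
    then have PB: "ptrace_A \<rho> = (1/2) *\<^sub>R mat 1" by simp
    from False n_def obtain k where kmin: "\<forall>j. \<bar>corr \<rho> k k\<bar> \<le> \<bar>corr \<rho> j j\<bar>" and nk: "n = axis k 1"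
      by auto
    have lk: "(corr \<rho> k k)\<^sup>2 \<le> (corr \<rho> j j)\<^sup>2" for j using kmin abs_le_square_iff by blast
    show ?thesis
    proof
      show "\<forall>U. cyclic \<rho> U \<longrightarrow> F U \<le> G"
      proof (intro allI impI)
        fix U assume "cyclic \<rho> U"
        then have uU: "unitary_mat U" by (simp add: cyclic_def)
        define B where "B j = (cmod (bet U j))\<^sup>2" for j
        have B0: "B j \<ge> 0" for j by (simp add: B_def)
        have Bs: "B 0 + B 1 + B 2 \<le> 1" using bet_le1[OF uU] by (simp add: B_def sum3)
        have "k = 0 \<or> k = 1 \<or> k = 2" by (rule ex3)
        then show "F U \<le> G"
        proof (elim disjE)
          assume k: "k = 0"
          show ?thesis unfolding F_def G_def sum3 gU3 B_def[symmetric] nk k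
            using ineqB[of "B 0" "B 1" "B 2" "(corr \<rho> 0 0)\<^sup>2" "(corr \<rho> 1 1)\<^sup>2" "(corr \<rho> 2 2)\<^sup>2"]
              B0 Bs lk[of 1] lk[of 2] k by (simp add: axis_def)
        next
          assume k: "k = 1"
          show ?thesis unfolding F_def G_def sum3 gU3 B_def[symmetric] nk k
            using ineqB[of "B 1" "B 0" "B 2" "(corr \<rho> 1 1)\<^sup>2" "(corr \<rho> 0 0)\<^sup>2" "(corr \<rho> 2 2)\<^sup>2"]
              B0 Bs lk[of 0] lk[of 2] k by (simp add: axis_def ac_simps)
        next
          assume k: "k = 2"
          show ?thesis unfolding F_def G_def sum3 gU3 B_def[symmetric] nk k
            using ineqB[of "B 2" "B 0" "B 1" "(corr \<rho> 2 2)\<^sup>2" "(corr \<rho> 0 0)\<^sup>2" "(corr \<rho> 1 1)\<^sup>2"]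
              B0 Bs lk[of 0] lk[of 1] k by (simp add: axis_def ac_simps)
        qed
      qed
      show "\<exists>U. cyclic \<rho> U \<and> F U = G"
      proof (intro exI conjI)
        show "cyclic \<rho> (pauli k)" unfolding cyclic_def PB by (simp add: pauli_unitary half_comm)
        show "F (pauli k) = G" unfolding F_def G_def nk by (simp add: pauli_gU)
      qed
    qed
  qed
  then obtain U0 where c0: "cyclic \<rho> U0" and f0: "F U0 = G" by blast
  have t: "(1 / sqrt 2) * sqrt (\<Sum>i\<in>UNIV. (corr \<rho> i i)\<^sup>2 * (1 - (n $ i)\<^sup>2)) = sqrt G / sqrt 2"
    by (simp add: G_def)
  show ?thesis unfolding is_dmax_def fu_dists_def t
  proof (intro conjI ballI)
    show "sqrt G / sqrt 2 \<in> {fu_dist \<rho> U |U. cyclic \<rho> U}" using c0 f0 fd[OF c0] by (metis (mono_tags, lifting) mem_Collect_eq)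
  next
    fix x assume "x \<in> {fu_dist \<rho> U |U. cyclic \<rho> U}"
    then obtain U where cU: "cyclic \<rho> U" and x: "x = fu_dist \<rho> U" by auto
    have "F U \<le> G" using main cU by blast
    then show "x \<le> sqrt G / sqrt 2" unfolding x fd[OF cU] by (simp add: divide_right_mono)
  qed
qed

end
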